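(* Let $G=(V,E)$ be a finite simple undirected graph with adjacency matrix $g$ and degrees $k_i$, containing at least one 4-spanning tree. Then $$C(4)=\frac{16\,|M_{63}^{(4)}|}{|M_{11}^{(4)}|+|M_{13}^{(4)}|}=\frac{4\sum_{i}\operatorname{tr}(g_{-i}^3)}{\sum_i k_i(k_i-1)(k_i-2)+6\sum_{\{i,j\}\in E}(k_i-1)(k_j-1)-3\operatorname{tr}(g^3)}.$$
   Context: For $b\ge3$, a $b$-clique is a set of $b$ pairwise adjacent nodes; a $b$-spanning tree in $G$ is a (not necessarily induced) subgraph of $G$ that is a tree on exactly $b$ nodes; and $C(b)=b^{b-2}\times(\#b\text{-cliques})/(\#b\text{-spanning trees})$. $|M_{63}^{(4)}|$ is the number of 4-cliques, $|M_{11}^{(4)}|$ the number of (not necessarily induced) subgraphs isomorphic to the star $K_{1,3}$, and $|M_{13}^{(4)}|$ the number of (not necessarily induced) subgraphs isomorphic to the path with 4 nodes and 3 edges. $g_{-i}$ is the adjacency matrix of the subgraph induced by the neighbourhood $\Gamma_G(i)$ of $i$; $k_i$ is the degree of $i$. *)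

theory Defs
  imports "HOL-Analysis.Analysis"
begin

definition simple_graph :: "'a set \<Rightarrow> ('a \<Rightarrow> 'a \<Rightarrow> bool) \<Rightarrow> bool" where
  "simple_graph V E \<longleftrightarrow> finite V \<and> (\<forall>x y. E x y \<longrightarrow> x \<in> V \<and> y \<in> V)
     \<and> (\<forall>x y. E x y \<longrightarrow> E y x) \<and> (\<forall>x. \<not> E x x)"

definition gedges :: "'a set \<Rightarrow> ('a \<Rightarrow> 'a \<Rightarrow> bool) \<Rightarrow> 'a set set" where
  "gedges V E = {{x, y} | x y. x \<in> V \<and> y \<in> V \<and> E x y}"

definition adj :: "('a \<Rightarrow> 'a \<Rightarrow> bool) \<Rightarrow> 'a \<Rightarrow> 'a \<Rightarrow> real" where
  "adj E i j = (if E i j then 1 else 0)"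

definition deg :: "'a set \<Rightarrow> ('a \<Rightarrow> 'a \<Rightarrow> bool) \<Rightarrow> 'a \<Rightarrow> nat" where
  "deg V E i = card {j \<in> V. E i j}"

definition nbhd :: "'a set \<Rightarrow> ('a \<Rightarrow> 'a \<Rightarrow> bool) \<Rightarrow> 'a \<Rightarrow> 'a set" where
  "nbhd V E i = {j \<in> V. E i j}"

text \<open>With S = V and M = adj E this is tr(g^3); with S = nbhd V E i it is tr(g_{-i}^3),
  g_{-i} being the principal submatrix of g on the neighbourhood of i.\<close>
definition trace_cube :: "'a set \<Rightarrow> ('a \<Rightarrow> 'a \<Rightarrow> real) \<Rightarrow> real" where
  "trace_cube S M = (\<Sum>i\<in>S. \<Sum>j\<in>S. \<Sum>l\<in>S. M i j * M j l * M l i)"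

definition cliques :: "'a set \<Rightarrow> ('a \<Rightarrow> 'a \<Rightarrow> bool) \<Rightarrow> nat \<Rightarrow> 'a set set" where
  "cliques V E b = {S. S \<subseteq> V \<and> card S = b \<and> (\<forall>x\<in>S. \<forall>y\<in>S. x \<noteq> y \<longrightarrow> E x y)}"

text \<open>Subgraphs are given by their edge sets F (subsets of the edges of G);
  their node set is the union of the edges.\<close>
definition sg_connected :: "'a set set \<Rightarrow> bool" where
  "sg_connected F \<longleftrightarrow> (\<forall>x\<in>\<Union>F. \<forall>y\<in>\<Union>F. (\<lambda>u v. {u, v} \<in> F)\<^sup>*\<^sup>* x y)"

definition sg_has_cycle :: "'a set set \<Rightarrow> bool" where
  "sg_has_cycle F \<longleftrightarrow> (\<exists>vs. length vs \<ge> 3 \<and> distinct vs \<and>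
       (\<forall>i < length vs. {vs ! i, vs ! ((i + 1) mod length vs)} \<in> F))"

definition sg_tree :: "'a set set \<Rightarrow> bool" where
  "sg_tree F \<longleftrightarrow> finite F \<and> sg_connected F \<and> \<not> sg_has_cycle F"

text \<open>b-spanning trees: (not necessarily induced) subgraphs that are trees on exactly b nodes.\<close>
definition spanning_trees :: "'a set \<Rightarrow> ('a \<Rightarrow> 'a \<Rightarrow> bool) \<Rightarrow> nat \<Rightarrow> 'a set set set" where
  "spanning_trees V E b = {F. F \<subseteq> gedges V E \<and> sg_tree F \<and> card (\<Union>F) = b}"

definition C :: "'a set \<Rightarrow> ('a \<Rightarrow> 'a \<Rightarrow> bool) \<Rightarrow> nat \<Rightarrow> real" where
  "C V E b = real b ^ (b - 2) * real (card (cliques V E b)) / real (card (spanning_trees V E b))"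

text \<open>M_11^(4): subgraphs isomorphic to the star K_{1,3};
  M_13^(4): subgraphs isomorphic to the path with 4 nodes and 3 edges.\<close>
definition stars3 :: "'a set \<Rightarrow> ('a \<Rightarrow> 'a \<Rightarrow> bool) \<Rightarrow> 'a set set set" where
  "stars3 V E = {F. F \<subseteq> gedges V E \<and>
     (\<exists>c a b d. distinct [c, a, b, d] \<and> F = {{c, a}, {c, b}, {c, d}})}"

definition paths4 :: "'a set \<Rightarrow> ('a \<Rightarrow> 'a \<Rightarrow> bool) \<Rightarrow> 'a set set set" where
  "paths4 V E = {F. F \<subseteq> gedges V E \<and>
     (\<exists>a b c d. distinct [a, b, c, d] \<and> F = {{a, b}, {b, c}, {c, d}})}"

end

theory Submission
  imports Defs
begin


lemma tri_cycle:
  assumes "distinct [x,y,z]" "{x,y} \<in> F" "{y,z} \<in> F" "{z,x} \<in> F"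
  shows "sg_has_cycle F"
  unfolding sg_has_cycle_def
proof (rule exI[of _ "[x,y,z]"], intro conjI allI impI)
  fix i assume "i < length [x,y,z]"
  then have "i = 0 \<or> i = 1 \<or> i = 2" by auto
  then show "{[x, y, z] ! i, [x, y, z] ! ((i + 1) mod length [x, y, z])} \<in> F"
    using assms by auto
qed (use assms in auto)

lemma quad_cycle:
  assumes "distinct [w,x,y,z]" "{w,x} \<in> F" "{x,y} \<in> F" "{y,z} \<in> F" "{z,w} \<in> F"
  shows "sg_has_cycle F"
  unfolding sg_has_cycle_def
proof (rule exI[of _ "[w,x,y,z]"], intro conjI allI impI)
  fix i assume "i < length [w,x,y,z]"
  then have "i = 0 \<or> i = 1 \<or> i = 2 \<or> i = 3" by auto
  then show "{[w,x, y, z] ! i, [w,x, y, z] ! ((i + 1) mod length [w,x, y, z])} \<in> F"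
    using assms by auto
qed (use assms in auto)

lemma match_disc:
  assumes "distinct [a,b,c,d]"
  shows "\<not> sg_connected {{a,b},{c,d}}"
proof
  let ?R = "\<lambda>u v. {u, v} \<in> {{a,b},{c,d}}"
  assume "sg_connected {{a,b},{c,d}}"
  then have "?R\<^sup>*\<^sup>* a c" unfolding sg_connected_def by auto
  moreover have "?R\<^sup>*\<^sup>* x y \<Longrightarrow> x \<in> {a,b} \<Longrightarrow> y \<in> {a,b}" for x y
    by (induction rule: rtranclp_induct) (use assms in \<open>auto simp: doubleton_eq_iff\<close>)
  ultimately show False using assms by auto
qed

lemma classify6:
  assumes "distinct [p,q,r,s]" "F \<subseteq> {{p,q},{p,r},{p,s},{q,r},{q,s},{r,s}}"
    "\<Union>F = {p,q,r,s}" "sg_connected F" "\<not> sg_has_cycle F"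
  shows "(\<exists>c a b d. distinct [c, a, b, d] \<and> F = {{c, a}, {c, b}, {c, d}})
       \<or> (\<exists>a b c d. distinct [a, b, c, d] \<and> F = {{a, b}, {b, c}, {c, d}})"

  apply (cases "{p,q} \<in> F"; cases "{p,r} \<in> F"; cases "{p,s} \<in> F"; cases "{q,r} \<in> F"; cases "{q,s} \<in> F"; cases "{r,s} \<in> F")
  subgoal premises h
  proof -
    have "sg_has_cycle F" by (rule tri_cycle[of p q r]) (use h assms(1) in \<open>auto simp: insert_commute\<close>)
    then show ?thesis using assms(4,5) by blast
  qed
  subgoal premises h
  proof -
    have "sg_has_cycle F" by (rule tri_cycle[of p q r]) (use h assms(1) in \<open>auto simp: insert_commute\<close>)
    then show ?thesis using assms(4,5) by blast
  qed
  subgoal premises h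
  proof -
    have "sg_has_cycle F" by (rule tri_cycle[of p q r]) (use h assms(1) in \<open>auto simp: insert_commute\<close>)
    then show ?thesis using assms(4,5) by blast
  qed
  subgoal premises h
  proof -
    have "sg_has_cycle F" by (rule tri_cycle[of p q r]) (use h assms(1) in \<open>auto simp: insert_commute\<close>)
    then show ?thesis using assms(4,5) by blast
  qed
  subgoal premises h
  proof -
    have "sg_has_cycle F" by (rule tri_cycle[of p q s]) (use h assms(1) in \<open>auto simp: insert_commute\<close>)
    then show ?thesis using assms(4,5) by blast
  qed
  subgoal premises h
  proof -
    have "sg_has_cycle F" by (rule tri_cycle[of p q s]) (use h assms(1) in \<open>auto simp: insert_commute\<close>)
    then show ?thesis using assms(4,5) by blast
  qed
  subgoal premises h
  proof -
    have "sg_has_cycle F" by (rule tri_cycle[of p r s]) (use h assms(1) in \<open>auto simp: insert_commute\<close>)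
    then show ?thesis using assms(4,5) by blast
  qed
  subgoal premises h
  proof -
    have Fe: "F = {{p,q},{p,r},{p,s}}" using h assms(2) by auto
    have "distinct [p,q,r,s] \<and> F = {{p,q},{p,r},{p,s}}" using assms(1) Fe by (auto simp: insert_commute)
    then show ?thesis by blast
  qed
  subgoal premises h
  proof -
    have "sg_has_cycle F" by (rule tri_cycle[of p q r]) (use h assms(1) in \<open>auto simp: insert_commute\<close>)
    then show ?thesis using assms(4,5) by blast
  qed
  subgoal premises h
  proof -
    have "sg_has_cycle F" by (rule tri_cycle[of p q r]) (use h assms(1) in \<open>auto simp: insert_commute\<close>)
    then show ?thesis using assms(4,5) by blast
  qed
  subgoal premises h
  proof -
    have "sg_has_cycle F" by (rule tri_cycle[of p q r]) (use h assms(1) in \<open>auto simp: insert_commute\<close>)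
    then show ?thesis using assms(4,5) by blast
  qed
  subgoal premises h
  proof -
    have Fe: "F = {{p,q},{p,r},{q,r}}" using h assms(2) by auto
    show ?thesis using assms(1,3) Fe by auto
  qed
  subgoal premises h
  proof -
    have "sg_has_cycle F" by (rule quad_cycle[of p q s r]) (use h assms(1) in \<open>auto simp: insert_commute\<close>)
    then show ?thesis using assms(4,5) by blast
  qed
  subgoal premises h
  proof -
    have Fe: "F = {{p,q},{p,r},{q,s}}" using h assms(2) by auto
    have "distinct [r,p,q,s] \<and> F = {{r,p},{p,q},{q,s}}" using assms(1) Fe by (auto simp: insert_commute)
    then show ?thesis by blast
  qed
  subgoal premises h
  proof -
    have Fe: "F = {{p,q},{p,r},{r,s}}" using h assms(2) by auto
    have "distinct [q,p,r,s] \<and> F = {{q,p},{p,r},{r,s}}" using assms(1) Fe by (auto simp: insert_commute)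
    then show ?thesis by blast
  qed
  subgoal premises h
  proof -
    have Fe: "F = {{p,q},{p,r}}" using h assms(2) by auto
    show ?thesis using assms(1,3) Fe by auto
  qed
  subgoal premises h
  proof -
    have "sg_has_cycle F" by (rule tri_cycle[of p q s]) (use h assms(1) in \<open>auto simp: insert_commute\<close>)
    then show ?thesis using assms(4,5) by blast
  qed
  subgoal premises h
  proof -
    have "sg_has_cycle F" by (rule tri_cycle[of p q s]) (use h assms(1) in \<open>auto simp: insert_commute\<close>)
    then show ?thesis using assms(4,5) by blast
  qed
  subgoal premises h
  proof -
    have "sg_has_cycle F" by (rule quad_cycle[of p q r s]) (use h assms(1) in \<open>auto simp: insert_commute\<close>)
    then show ?thesis using assms(4,5) by blast
  qed
  subgoal premises h
  proof -
    have Fe: "F = {{p,q},{p,s},{q,r}}" using h assms(2) by auto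
    have "distinct [r,q,p,s] \<and> F = {{r,q},{q,p},{p,s}}" using assms(1) Fe by (auto simp: insert_commute)
    then show ?thesis by blast
  qed
  subgoal premises h
  proof -
    have "sg_has_cycle F" by (rule tri_cycle[of p q s]) (use h assms(1) in \<open>auto simp: insert_commute\<close>)
    then show ?thesis using assms(4,5) by blast
  qed
  subgoal premises h
  proof -
    have Fe: "F = {{p,q},{p,s},{q,s}}" using h assms(2) by auto
    show ?thesis using assms(1,3) Fe by auto
  qed
  subgoal premises h
  proof -
    have Fe: "F = {{p,q},{p,s},{r,s}}" using h assms(2) by auto
    have "distinct [q,p,s,r] \<and> F = {{q,p},{p,s},{s,r}}" using assms(1) Fe by (auto simp: insert_commute)
    then show ?thesis by blast
  qed
  subgoal premises h
  proof -
    have Fe: "F = {{p,q},{p,s}}" using h assms(2) by auto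
    show ?thesis using assms(1,3) Fe by auto
  qed
  subgoal premises h
  proof -
    have "sg_has_cycle F" by (rule tri_cycle[of q r s]) (use h assms(1) in \<open>auto simp: insert_commute\<close>)
    then show ?thesis using assms(4,5) by blast
  qed
  subgoal premises h
  proof -
    have Fe: "F = {{p,q},{q,r},{q,s}}" using h assms(2) by auto
    have "distinct [q,p,r,s] \<and> F = {{q,p},{q,r},{q,s}}" using assms(1) Fe by (auto simp: insert_commute)
    then show ?thesis by blast
  qed
  subgoal premises h
  proof -
    have Fe: "F = {{p,q},{q,r},{r,s}}" using h assms(2) by auto
    have "distinct [p,q,r,s] \<and> F = {{p,q},{q,r},{r,s}}" using assms(1) Fe by (auto simp: insert_commute)
    then show ?thesis by blast
  qed
  subgoal premises h
  proof -
    have Fe: "F = {{p,q},{q,r}}" using h assms(2) by auto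
    show ?thesis using assms(1,3) Fe by auto
  qed
  subgoal premises h
  proof -
    have Fe: "F = {{p,q},{q,s},{r,s}}" using h assms(2) by auto
    have "distinct [p,q,s,r] \<and> F = {{p,q},{q,s},{s,r}}" using assms(1) Fe by (auto simp: insert_commute)
    then show ?thesis by blast
  qed
  subgoal premises h
  proof -
    have Fe: "F = {{p,q},{q,s}}" using h assms(2) by auto
    show ?thesis using assms(1,3) Fe by auto
  qed
  subgoal premises h
  proof -
    have Fe: "F = {{p,q},{r,s}}" using h assms(2) by auto
    have "\<not> sg_connected F" unfolding Fe by (rule match_disc) (use h assms(1) in \<open>auto simp: insert_commute\<close>)
    then show ?thesis using assms(4,5) by blast
  qed
  subgoal premises h
  proof -
    have Fe: "F = {{p,q}}" using h assms(2) by auto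
    show ?thesis using assms(1,3) Fe by auto
  qed
  subgoal premises h
  proof -
    have "sg_has_cycle F" by (rule tri_cycle[of p r s]) (use h assms(1) in \<open>auto simp: insert_commute\<close>)
    then show ?thesis using assms(4,5) by blast
  qed
  subgoal premises h
  proof -
    have "sg_has_cycle F" by (rule quad_cycle[of p r q s]) (use h assms(1) in \<open>auto simp: insert_commute\<close>)
    then show ?thesis using assms(4,5) by blast
  qed
  subgoal premises h
  proof -
    have "sg_has_cycle F" by (rule tri_cycle[of p r s]) (use h assms(1) in \<open>auto simp: insert_commute\<close>)
    then show ?thesis using assms(4,5) by blast
  qed
  subgoal premises h
  proof -
    have Fe: "F = {{p,r},{p,s},{q,r}}" using h assms(2) by auto
    have "distinct [q,r,p,s] \<and> F = {{q,r},{r,p},{p,s}}" using assms(1) Fe by (auto simp: insert_commute)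
    then show ?thesis by blast
  qed
  subgoal premises h
  proof -
    have "sg_has_cycle F" by (rule tri_cycle[of p r s]) (use h assms(1) in \<open>auto simp: insert_commute\<close>)
    then show ?thesis using assms(4,5) by blast
  qed
  subgoal premises h
  proof -
    have Fe: "F = {{p,r},{p,s},{q,s}}" using h assms(2) by auto
    have "distinct [q,s,p,r] \<and> F = {{q,s},{s,p},{p,r}}" using assms(1) Fe by (auto simp: insert_commute)
    then show ?thesis by blast
  qed
  subgoal premises h
  proof -
    have Fe: "F = {{p,r},{p,s},{r,s}}" using h assms(2) by auto
    show ?thesis using assms(1,3) Fe by auto
  qed
  subgoal premises h
  proof -
    have Fe: "F = {{p,r},{p,s}}" using h assms(2) by auto
    show ?thesis using assms(1,3) Fe by auto
  qed
  subgoal premises h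
  proof -
    have "sg_has_cycle F" by (rule tri_cycle[of q r s]) (use h assms(1) in \<open>auto simp: insert_commute\<close>)
    then show ?thesis using assms(4,5) by blast
  qed
  subgoal premises h
  proof -
    have Fe: "F = {{p,r},{q,r},{q,s}}" using h assms(2) by auto
    have "distinct [p,r,q,s] \<and> F = {{p,r},{r,q},{q,s}}" using assms(1) Fe by (auto simp: insert_commute)
    then show ?thesis by blast
  qed
  subgoal premises h
  proof -
    have Fe: "F = {{p,r},{q,r},{r,s}}" using h assms(2) by auto
    have "distinct [r,p,q,s] \<and> F = {{r,p},{r,q},{r,s}}" using assms(1) Fe by (auto simp: insert_commute)
    then show ?thesis by blast
  qed
  subgoal premises h
  proof -
    have Fe: "F = {{p,r},{q,r}}" using h assms(2) by auto
    show ?thesis using assms(1,3) Fe by auto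
  qed
  subgoal premises h
  proof -
    have Fe: "F = {{p,r},{q,s},{r,s}}" using h assms(2) by auto
    have "distinct [p,r,s,q] \<and> F = {{p,r},{r,s},{s,q}}" using assms(1) Fe by (auto simp: insert_commute)
    then show ?thesis by blast
  qed
  subgoal premises h
  proof -
    have Fe: "F = {{p,r},{q,s}}" using h assms(2) by auto
    have "\<not> sg_connected F" unfolding Fe by (rule match_disc) (use h assms(1) in \<open>auto simp: insert_commute\<close>)
    then show ?thesis using assms(4,5) by blast
  qed
  subgoal premises h
  proof -
    have Fe: "F = {{p,r},{r,s}}" using h assms(2) by auto
    show ?thesis using assms(1,3) Fe by auto
  qed
  subgoal premises h
  proof -
    have Fe: "F = {{p,r}}" using h assms(2) by auto
    show ?thesis using assms(1,3) Fe by auto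
  qed
  subgoal premises h
  proof -
    have "sg_has_cycle F" by (rule tri_cycle[of q r s]) (use h assms(1) in \<open>auto simp: insert_commute\<close>)
    then show ?thesis using assms(4,5) by blast
  qed
  subgoal premises h
  proof -
    have Fe: "F = {{p,s},{q,r},{q,s}}" using h assms(2) by auto
    have "distinct [p,s,q,r] \<and> F = {{p,s},{s,q},{q,r}}" using assms(1) Fe by (auto simp: insert_commute)
    then show ?thesis by blast
  qed
  subgoal premises h
  proof -
    have Fe: "F = {{p,s},{q,r},{r,s}}" using h assms(2) by auto
    have "distinct [p,s,r,q] \<and> F = {{p,s},{s,r},{r,q}}" using assms(1) Fe by (auto simp: insert_commute)
    then show ?thesis by blast
  qed
  subgoal premises h
  proof -
    have Fe: "F = {{p,s},{q,r}}" using h assms(2) by auto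
    have "\<not> sg_connected F" unfolding Fe by (rule match_disc) (use h assms(1) in \<open>auto simp: insert_commute\<close>)
    then show ?thesis using assms(4,5) by blast
  qed
  subgoal premises h
  proof -
    have Fe: "F = {{p,s},{q,s},{r,s}}" using h assms(2) by auto
    have "distinct [s,p,q,r] \<and> F = {{s,p},{s,q},{s,r}}" using assms(1) Fe by (auto simp: insert_commute)
    then show ?thesis by blast
  qed
  subgoal premises h
  proof -
    have Fe: "F = {{p,s},{q,s}}" using h assms(2) by auto
    show ?thesis using assms(1,3) Fe by auto
  qed
  subgoal premises h
  proof -
    have Fe: "F = {{p,s},{r,s}}" using h assms(2) by auto
    show ?thesis using assms(1,3) Fe by auto
  qed
  subgoal premises h
  proof -
    have Fe: "F = {{p,s}}" using h assms(2) by auto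
    show ?thesis using assms(1,3) Fe by auto
  qed
  subgoal premises h
  proof -
    have Fe: "F = {{q,r},{q,s},{r,s}}" using h assms(2) by auto
    show ?thesis using assms(1,3) Fe by auto
  qed
  subgoal premises h
  proof -
    have Fe: "F = {{q,r},{q,s}}" using h assms(2) by auto
    show ?thesis using assms(1,3) Fe by auto
  qed
  subgoal premises h
  proof -
    have Fe: "F = {{q,r},{r,s}}" using h assms(2) by auto
    show ?thesis using assms(1,3) Fe by auto
  qed
  subgoal premises h
  proof -
    have Fe: "F = {{q,r}}" using h assms(2) by auto
    show ?thesis using assms(1,3) Fe by auto
  qed
  subgoal premises h
  proof -
    have Fe: "F = {{q,s},{r,s}}" using h assms(2) by auto
    show ?thesis using assms(1,3) Fe by auto
  qed
  subgoal premises h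
  proof -
    have Fe: "F = {{q,s}}" using h assms(2) by auto
    show ?thesis using assms(1,3) Fe by auto
  qed
  subgoal premises h
  proof -
    have Fe: "F = {{r,s}}" using h assms(2) by auto
    show ?thesis using assms(1,3) Fe by auto
  qed
  subgoal premises h
  proof -
    have Fe: "F = {}" using h assms(2) by auto
    show ?thesis using assms(1,3) Fe by auto
  qed
  done


lemma card4_obtain:
  assumes "card A = 4"
  obtains p q r s where "distinct [p,q,r,s]" "A = {p,q,r,s}"
proof -
  have c4: "card A = Suc 3" using assms by simp
  obtain p A1 where "A = insert p A1" "p \<notin> A1" "card A1 = 3"
    using card_Suc_eq[of A 3] c4 by auto
  moreover have c3: "card A1 = Suc 2" using \<open>card A1 = 3\<close> by simp
  obtain q A2 where "A1 = insert q A2" "q \<notin> A2" "card A2 = 2"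
    using card_Suc_eq[of A1 2] c3 by auto
  moreover obtain r s where "A2 = {r,s}" "r \<noteq> s"
    using \<open>card A2 = 2\<close> card_2_iff by metis
  ultimately show ?thesis using that[of p q r s] by auto
qed

lemma cycle_two_nbrs:
  assumes "sg_has_cycle F"
  obtains vs where "length vs \<ge> 3" "distinct vs"
    "\<forall>v\<in>set vs. \<exists>x y. x \<noteq> y \<and> {v,x} \<in> F \<and> {v,y} \<in> F"
proof -
  from assms obtain vs where L: "length vs \<ge> 3" and D: "distinct vs"
    and Ed: "\<forall>i < length vs. {vs ! i, vs ! ((i + 1) mod length vs)} \<in> F"
    unfolding sg_has_cycle_def by blast
  let ?n = "length vs"
  have nb: "\<exists>x y. x \<noteq> y \<and> {v,x} \<in> F \<and> {v,y} \<in> F" if "v \<in> set vs" for v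
  proof -
    from that obtain i where i: "i < ?n" "v = vs ! i" by (auto simp: in_set_conv_nth)
    define j where "j = (if i = 0 then ?n - 1 else i - 1)"
    have j: "j < ?n" "(j + 1) mod ?n = i" using i L by (auto simp: j_def)
    have e1: "{v, vs ! ((i + 1) mod ?n)} \<in> F" using Ed i by auto
    have "{vs ! j, vs ! ((j + 1) mod ?n)} \<in> F" using Ed j(1) by blast
    then have e2: "{v, vs ! j} \<in> F" using j(2) i(2) by (simp add: insert_commute)
    have "(i + 1) mod ?n \<noteq> j"
    proof (cases "i = ?n - 1")
      case True
      moreover have "Suc (?n - 1) = ?n" using L by simp
      ultimately have "(i + 1) mod ?n = 0" by simp
      moreover have "j = ?n - 2" using True L by (simp add: j_def)
      ultimately show ?thesis using L by simp
    next
      case False then have "(i+1) mod ?n = i + 1" using i by auto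
      then show ?thesis using L i by (auto simp: j_def)
    qed
    then have "vs ! ((i + 1) mod ?n) \<noteq> vs ! j"
    proof -
      have "(i + 1) mod ?n < ?n" using L by (intro mod_less_divisor) linarith
      then show ?thesis using D j \<open>(i + 1) mod ?n \<noteq> j\<close> by (simp add: nth_eq_iff_index_eq)
    qed
    then show ?thesis using e1 e2 by blast
  qed
  show ?thesis
  proof (rule that[OF L D], intro ballI)
    fix v assume "v \<in> set vs" then show "\<exists>x y. x \<noteq> y \<and> {v,x} \<in> F \<and> {v,y} \<in> F" by (rule nb)
  qed
qed

lemma cycle_small:
  assumes "sg_has_cycle F" "\<And>v x y. x \<noteq> y \<Longrightarrow> {v,x} \<in> F \<Longrightarrow> {v,y} \<in> F \<Longrightarrow> v \<in> S"
    "card S \<le> 2" "finite S"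
  shows False
proof -
  obtain vs where "length vs \<ge> 3" "distinct vs" and nb:
    "\<forall>v\<in>set vs. \<exists>x y. x \<noteq> y \<and> {v,x} \<in> F \<and> {v,y} \<in> F"
    by (rule cycle_two_nbrs[OF assms(1)])
  have "set vs \<subseteq> S"
  proof
    fix v assume "v \<in> set vs"
    then obtain x y where "x \<noteq> y" "{v,x} \<in> F" "{v,y} \<in> F" using nb by blast
    then show "v \<in> S" by (rule assms(2))
  qed
  then have "card (set vs) \<le> card S" using assms(4) by (simp add: card_mono)
  then show False using \<open>length vs \<ge> 3\<close> \<open>distinct vs\<close> assms(3) by (simp add: distinct_card)
qed


lemma star_acyclic:
  assumes "distinct [c,a,b,d]"
  shows "\<not> sg_has_cycle {{c,a},{c,b},{c,d}}"
proof
  assume "sg_has_cycle {{c,a},{c,b},{c,d}}"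
  then show False
    by (rule cycle_small[where S="{c}"]) (use assms in \<open>auto simp: doubleton_eq_iff\<close>)
qed

lemma path_acyclic:
  assumes "distinct [a,b,c,d]"
  shows "\<not> sg_has_cycle {{a,b},{b,c},{c,d}}"
proof
  assume "sg_has_cycle {{a,b},{b,c},{c,d}}"
  then show False
    by (rule cycle_small[where S="{b,c}"]) (use assms in \<open>auto simp: doubleton_eq_iff card_insert_if\<close>)
qed


lemma star_conn:
  assumes "distinct [c,a,b,d]"
  shows "sg_connected {{c,a},{c,b},{c,d}}"
proof -
  let ?R = "\<lambda>u v. {u, v} \<in> {{c,a},{c,b},{c,d}}"
  have 1: "?R\<^sup>*\<^sup>* x c \<and> ?R\<^sup>*\<^sup>* c x" if "x \<in> {c,a,b,d}" for x
    using that by (auto intro!: r_into_rtranclp simp: insert_commute)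
  show ?thesis unfolding sg_connected_def
  proof (intro ballI)
    fix x y assume "x \<in> \<Union>{{c,a},{c,b},{c,d}}" "y \<in> \<Union>{{c,a},{c,b},{c,d}}"
    then have x: "x \<in> {c,a,b,d}" and y: "y \<in> {c,a,b,d}" by auto
    show "?R\<^sup>*\<^sup>* x y" using rtranclp_trans[OF conjunct1[OF 1[OF x]] conjunct2[OF 1[OF y]]] .
  qed
qed

lemma path_conn:
  assumes "distinct [a,b,c,d]"
  shows "sg_connected {{a,b},{b,c},{c,d}}"
proof -
  let ?R = "\<lambda>u v. {u, v} \<in> {{a,b},{b,c},{c,d}}"
  have ab: "?R a b" "?R b a" "?R b c" "?R c b" "?R c d" "?R d c" by (auto simp: insert_commute)
  have 1: "?R\<^sup>*\<^sup>* x a \<and> ?R\<^sup>*\<^sup>* a x" if "x \<in> {a,b,c,d}" for x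
  proof -
    have s1: "?R\<^sup>*\<^sup>* a b" "?R\<^sup>*\<^sup>* b a" "?R\<^sup>*\<^sup>* b c" "?R\<^sup>*\<^sup>* c b" "?R\<^sup>*\<^sup>* c d" "?R\<^sup>*\<^sup>* d c"
      using ab by (auto intro: r_into_rtranclp)
    have s2: "?R\<^sup>*\<^sup>* a c" "?R\<^sup>*\<^sup>* c a"
      using rtranclp_trans[OF s1(1) s1(3)] rtranclp_trans[OF s1(4) s1(2)] by auto
    have s3: "?R\<^sup>*\<^sup>* a d" "?R\<^sup>*\<^sup>* d a"
      using rtranclp_trans[OF s2(1) s1(5)] rtranclp_trans[OF s1(6) s2(2)] by auto
    show ?thesis using that s1 s2 s3 by auto
  qed
  show ?thesis unfolding sg_connected_def
  proof (intro ballI)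
    fix x y assume "x \<in> \<Union>{{a,b},{b,c},{c,d}}" "y \<in> \<Union>{{a,b},{b,c},{c,d}}"
    then have x: "x \<in> {a,b,c,d}" and y: "y \<in> {a,b,c,d}" by auto
    show "?R\<^sup>*\<^sup>* x y" using rtranclp_trans[OF conjunct1[OF 1[OF x]] conjunct2[OF 1[OF y]]] .
  qed
qed



lemma sg_E: "simple_graph V E \<Longrightarrow> E x y \<Longrightarrow> x \<in> V \<and> y \<in> V \<and> E y x \<and> x \<noteq> y"
  unfolding simple_graph_def by metis

lemma gedges_elem:
  assumes "simple_graph V E" "e \<in> gedges V E"
  obtains x y where "e = {x,y}" "x \<noteq> y" "E x y" "x \<in> V" "y \<in> V"
proof -
  obtain x y where "e = {x,y}" "x \<in> V" "y \<in> V" "E x y" using assms(2) unfolding gedges_def by blast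
  then show ?thesis using that sg_E[OF assms(1), of x y] by blast
qed

lemma in_gedges: "E x y \<Longrightarrow> x \<in> V \<Longrightarrow> y \<in> V \<Longrightarrow> {x,y} \<in> gedges V E"
  unfolding gedges_def by blast

lemma finite_gedges:
  assumes "simple_graph V E" shows "finite (gedges V E)"
proof -
  have "gedges V E \<subseteq> Pow V" unfolding gedges_def by auto
  moreover have "finite V" using assms unfolding simple_graph_def by auto
  ultimately show ?thesis by (meson finite_Pow_iff finite_subset)
qed

lemma st_sub:
  assumes G: "simple_graph V E" and F: "F \<in> spanning_trees V E 4"
  shows "F \<in> stars3 V E \<union> paths4 V E"
proof -
  have FG: "F \<subseteq> gedges V E" and T: "sg_tree F" and c: "card (\<Union>F) = 4"
    using F unfolding spanning_trees_def by simp_all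
  obtain p q r s where D: "distinct [p,q,r,s]" and W: "\<Union>F = {p,q,r,s}"
    by (rule card4_obtain[OF c])
  have six: "F \<subseteq> {{p,q},{p,r},{p,s},{q,r},{q,s},{r,s}}"
  proof
    fix e assume e: "e \<in> F"
    have "e \<in> gedges V E" using e FG by blast
    then obtain x y where xy: "e = {x,y}" "x \<noteq> y" by (rule gedges_elem[OF G])
    have "x \<in> \<Union>F" "y \<in> \<Union>F" using e xy(1) by blast+
    then have "x \<in> {p,q,r,s}" "y \<in> {p,q,r,s}" unfolding W by -
    then show "e \<in> {{p,q},{p,r},{p,s},{q,r},{q,s},{r,s}}"
      using xy by (auto simp: insert_commute)
  qed
  have "(\<exists>c a b d. distinct [c, a, b, d] \<and> F = {{c, a}, {c, b}, {c, d}})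
       \<or> (\<exists>a b c d. distinct [a, b, c, d] \<and> F = {{a, b}, {b, c}, {c, d}})"
    by (rule classify6[OF D six W]) (use T in \<open>auto simp: sg_tree_def\<close>)
  then show ?thesis
  proof
    assume "\<exists>c a b d. distinct [c, a, b, d] \<and> F = {{c, a}, {c, b}, {c, d}}"
    then have "F \<in> stars3 V E" using FG unfolding stars3_def by simp
    then show ?thesis by simp
  next
    assume "\<exists>a b c d. distinct [a, b, c, d] \<and> F = {{a, b}, {b, c}, {c, d}}"
    then have "F \<in> paths4 V E" using FG unfolding paths4_def by simp
    then show ?thesis by simp
  qed
qed

lemma stars_st:
  assumes "F \<in> stars3 V E" shows "F \<in> spanning_trees V E 4"
proof -
  obtain c a b d where D: "distinct [c,a,b,d]" and Fe: "F = {{c, a}, {c, b}, {c, d}}"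
    and FG: "F \<subseteq> gedges V E"
  proof -
    have h: "F \<subseteq> gedges V E" "\<exists>c a b d. distinct [c,a,b,d] \<and> F = {{c, a}, {c, b}, {c, d}}"
      using assms unfolding stars3_def by simp_all
    from h(2) show ?thesis by (elim exE conjE) (rule that[OF _ _ h(1)])
  qed
  have "\<Union>F = {c,a,b,d}" unfolding Fe by auto
  then have "card (\<Union>F) = 4" using D by simp
  moreover have "sg_tree F" unfolding sg_tree_def Fe
    using star_conn[OF D] star_acyclic[OF D] by simp
  ultimately show ?thesis using FG unfolding spanning_trees_def by blast
qed

lemma paths_st:
  assumes "F \<in> paths4 V E" shows "F \<in> spanning_trees V E 4"
proof -
  obtain a b c d where D: "distinct [a,b,c,d]" and Fe: "F = {{a, b}, {b, c}, {c, d}}"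
    and FG: "F \<subseteq> gedges V E"
  proof -
    have h: "F \<subseteq> gedges V E" "\<exists>a b c d. distinct [a,b,c,d] \<and> F = {{a, b}, {b, c}, {c, d}}"
      using assms unfolding paths4_def by simp_all
    from h(2) show ?thesis by (elim exE conjE) (rule that[OF _ _ h(1)])
  qed
  have "\<Union>F = {a,b,c,d}" unfolding Fe by auto
  then have "card (\<Union>F) = 4" using D by simp
  moreover have "sg_tree F" unfolding sg_tree_def Fe
    using path_conn[OF D] path_acyclic[OF D] by simp
  ultimately show ?thesis using FG unfolding spanning_trees_def by blast
qed

lemma star_path:
  assumes "distinct [c,a,b,d]" "distinct [a',b',c',d']"
   "{{a',b'},{b',c'},{c',d'}} \<subseteq> {{c,a},{c,b},{c,d}}"
  shows False
  using assms by (auto simp: doubleton_eq_iff)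

lemma card_st:
  assumes G: "simple_graph V E"
  shows "card (spanning_trees V E 4) = card (stars3 V E) + card (paths4 V E)"
proof -
  have eq: "spanning_trees V E 4 = stars3 V E \<union> paths4 V E"
  proof
    show "spanning_trees V E 4 \<subseteq> stars3 V E \<union> paths4 V E" using st_sub[OF G] by blast
    show "stars3 V E \<union> paths4 V E \<subseteq> spanning_trees V E 4" using stars_st paths_st by blast
  qed
  have dj: "stars3 V E \<inter> paths4 V E = {}"
  proof (rule ccontr)
    assume "stars3 V E \<inter> paths4 V E \<noteq> {}"
    then obtain F where FS: "F \<in> stars3 V E" and FP: "F \<in> paths4 V E" by blast
    have "\<exists>c a b d. distinct [c,a,b,d] \<and> F = {{c, a}, {c, b}, {c, d}}"
      using FS unfolding stars3_def by simp
    then obtain c a b d where 1: "distinct [c,a,b,d]" "F = {{c, a}, {c, b}, {c, d}}"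
      by (elim exE conjE) (rule that)
    have "\<exists>a b c d. distinct [a,b,c,d] \<and> F = {{a, b}, {b, c}, {c, d}}"
      using FP unfolding paths4_def by simp
    then obtain a' b' c' d' where 2: "distinct [a',b',c',d']" "F = {{a', b'}, {b', c'}, {c', d'}}"
      by (elim exE conjE) (rule that)
    have "{{a',b'},{b',c'},{c',d'}} \<subseteq> {{c,a},{c,b},{c,d}}"
      unfolding 2(2)[symmetric] 1(2)[symmetric] by (rule order_refl)
    then show False using star_path[OF 1(1) 2(1)] by blast
  qed
  have "stars3 V E \<subseteq> Pow (gedges V E)" "paths4 V E \<subseteq> Pow (gedges V E)"
    unfolding stars3_def paths4_def by blast+
  then have fin: "finite (stars3 V E)" "finite (paths4 V E)"
    using finite_gedges[OF G] by (meson finite_Pow_iff finite_subset)+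
  show ?thesis unfolding eq using card_Un_disjoint[OF fin dj] .
qed



lemma card_fibers:
  assumes "finite A" "finite B" "f ` A \<subseteq> B" "\<And>b. b \<in> B \<Longrightarrow> card {a \<in> A. f a = b} = n"
  shows "card A = n * card B"
proof -
  have "card A = (\<Sum>a\<in>A. 1)" by simp
  also have "\<dots> = (\<Sum>b\<in>B. \<Sum>a\<in>{a. a \<in> A \<and> f a = b}. 1)"
    using sum.group[OF assms(1,2,3), of "\<lambda>_. 1::nat"] by simp
  also have "\<dots> = (\<Sum>b\<in>B. n)" using assms(4) by simp
  finally show ?thesis by simp
qed

definition tri3 :: "'a set \<Rightarrow> ('a \<Rightarrow> 'a \<Rightarrow> bool) \<Rightarrow> ('a \<times> 'a \<times> 'a) set" where
  "tri3 S E = {(j,l,m). j \<in> S \<and> l \<in> S \<and> m \<in> S \<and> E j l \<and> E l m \<and> E m j}"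

lemma tri3_sub: "tri3 S E \<subseteq> S \<times> S \<times> S" unfolding tri3_def by auto

lemma trace_card:
  assumes "finite S"
  shows "trace_cube S (adj E) = real (card (tri3 S E))"
proof -
  have "trace_cube S (adj E) = (\<Sum>j\<in>S. \<Sum>l\<in>S. \<Sum>m\<in>S. of_bool (E j l \<and> E l m \<and> E m j))"
    unfolding trace_cube_def adj_def by (intro sum.cong refl) auto
  also have "\<dots> = (\<Sum>(j,l,m)\<in>S \<times> S \<times> S. of_bool (E j l \<and> E l m \<and> E m j))"
    by (simp add: sum.cartesian_product)
  also have "\<dots> = (\<Sum>x\<in>S \<times> S \<times> S. of_bool (x \<in> tri3 S E))"
    by (rule sum.cong) (auto simp: tri3_def)
  also have "\<dots> = real (card ((S \<times> S \<times> S) \<inter> {x. x \<in> tri3 S E}))"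
    using assms by (simp only: sum_of_bool_eq finite_cartesian_product)
  also have "(S \<times> S \<times> S) \<inter> {x. x \<in> tri3 S E} = tri3 S E" using tri3_sub by blast
  finally show ?thesis .
qed

definition Qs :: "'a set \<Rightarrow> ('a \<Rightarrow> 'a \<Rightarrow> bool) \<Rightarrow> ('a \<times> 'a \<times> 'a \<times> 'a) set" where
  "Qs V E = {(i,j,l,m). i \<in> V \<and> j \<in> V \<and> l \<in> V \<and> m \<in> V \<and> E i j \<and> E i l \<and> E i m \<and> E j l \<and> E l m \<and> E m j}"

lemma finV: "simple_graph V E \<Longrightarrow> finite V" unfolding simple_graph_def by simp

lemma nbhd_sub: "nbhd V E i \<subseteq> V" unfolding nbhd_def by auto

lemma sum_trace_Qs:
  assumes G: "simple_graph V E"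
  shows "(\<Sum>i\<in>V. trace_cube (nbhd V E i) (adj E)) = real (card (Qs V E))"
proof -
  have fV: "finite V" using finV[OF G] .
  have fN: "finite (nbhd V E i)" for i using nbhd_sub fV by (rule finite_subset)
  have "Qs V E = Sigma V (\<lambda>i. tri3 (nbhd V E i) E)"
    unfolding Qs_def tri3_def nbhd_def by auto
  then have "card (Qs V E) = (\<Sum>i\<in>V. card (tri3 (nbhd V E i) E))"
    using fV fN tri3_sub by (simp add: finite_subset[OF tri3_sub])
  then show ?thesis by (simp add: trace_card[OF fN])
qed

lemma Q_fiber:
  assumes "distinct [p,q,r,s]"
  and "distinct [i,j,l,m]" "{i,j,l,m} = {p,q,r,s}"
  shows "(i,j,l,m) \<in> {(p,q,r,s),(p,q,s,r),(p,r,q,s),(p,r,s,q),(p,s,q,r),(p,s,r,q),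
     (q,p,r,s),(q,p,s,r),(q,r,p,s),(q,r,s,p),(q,s,p,r),(q,s,r,p),
     (r,p,q,s),(r,p,s,q),(r,q,p,s),(r,q,s,p),(r,s,p,q),(r,s,q,p),
     (s,p,q,r),(s,p,r,q),(s,q,p,r),(s,q,r,p),(s,r,p,q),(s,r,q,p)}"
proof -
  have "i \<in> {p,q,r,s}" "j \<in> {p,q,r,s}" "l \<in> {p,q,r,s}" "m \<in> {p,q,r,s}"
    using assms(3) by blast+
  then show ?thesis using assms(2) by (elim insertE emptyE) simp_all
qed

lemma card24:
  assumes "distinct [p,q,r,s]"
  shows "card {(p,q,r,s),(p,q,s,r),(p,r,q,s),(p,r,s,q),(p,s,q,r),(p,s,r,q),
     (q,p,r,s),(q,p,s,r),(q,r,p,s),(q,r,s,p),(q,s,p,r),(q,s,r,p),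
     (r,p,q,s),(r,p,s,q),(r,q,p,s),(r,q,s,p),(r,s,p,q),(r,s,q,p),
     (s,p,q,r),(s,p,r,q),(s,q,p,r),(s,q,r,p),(s,r,p,q),(s,r,q,p)} = 24"
  using assms by simp

lemma sg_Es:
  assumes "simple_graph V E" "E x y"
  shows "x \<in> V" "y \<in> V" "E y x" "x \<noteq> y"
  using sg_E[OF assms] by auto

lemma finite_Qs: "simple_graph V E \<Longrightarrow> finite (Qs V E)"
proof -
  assume G: "simple_graph V E"
  have "Qs V E \<subseteq> V \<times> V \<times> V \<times> V" unfolding Qs_def by auto
  then show ?thesis using finV[OF G] by (simp add: finite_subset)
qed

lemma finite_cliques: "simple_graph V E \<Longrightarrow> finite (cliques V E b)"
proof -
  assume G: "simple_graph V E"
  have "cliques V E b \<subseteq> Pow V" unfolding cliques_def by auto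
  then show ?thesis using finV[OF G] by (simp add: finite_subset)
qed

lemma Q_cliques:
  assumes G: "simple_graph V E"
  shows "card (Qs V E) = 24 * card (cliques V E 4)"
proof (rule card_fibers[where f="\<lambda>(i,j,l,m). {i,j,l,m}"])
  show "finite (Qs V E)" by (rule finite_Qs[OF G])
  show "finite (cliques V E 4)" by (rule finite_cliques[OF G])
  show "(\<lambda>(i,j,l,m). {i,j,l,m}) ` Qs V E \<subseteq> cliques V E 4"
  proof
    fix K assume "K \<in> (\<lambda>(i,j,l,m). {i,j,l,m}) ` Qs V E"
    then obtain i j l m where t: "(i,j,l,m) \<in> Qs V E" and K: "K = {i,j,l,m}" by auto
    have e: "E i j" "E i l" "E i m" "E j l" "E l m" "E m j" "i \<in> V" "j \<in> V" "l \<in> V" "m \<in> V"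
      using t unfolding Qs_def by simp_all
    have ne: "i \<noteq> j" "i \<noteq> l" "i \<noteq> m" "j \<noteq> l" "l \<noteq> m" "m \<noteq> j"
      using e(1-6) sg_Es(4)[OF G] by blast+
    have sym: "E j i" "E l i" "E m i" "E l j" "E m l" "E j m"
      using e(1-6) sg_Es(3)[OF G] by blast+
    have "K \<subseteq> V" using K e by simp
    moreover have "card K = 4" using K ne by (simp add: card_insert_if)
    moreover have "\<forall>x\<in>K. \<forall>y\<in>K. x \<noteq> y \<longrightarrow> E x y" using K e sym by simp
    ultimately show "K \<in> cliques V E 4" unfolding cliques_def by simp
  qed
  fix K assume "K \<in> cliques V E 4"
  then have KV: "K \<subseteq> V" and cK: "card K = 4" and adjK: "\<forall>x\<in>K. \<forall>y\<in>K. x \<noteq> y \<longrightarrow> E x y"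
    unfolding cliques_def by simp_all
  obtain p q r s where D: "distinct [p,q,r,s]" and Ke: "K = {p,q,r,s}" by (rule card4_obtain[OF cK])
  have Es: "E p q" "E p r" "E p s" "E q r" "E q s" "E r s" "E q p" "E r p" "E s p" "E r q" "E s q" "E s r"
    using adjK D unfolding Ke by auto
  have Vs: "p \<in> V" "q \<in> V" "r \<in> V" "s \<in> V" using KV unfolding Ke by simp_all
  have "{a \<in> Qs V E. (\<lambda>(i,j,l,m). {i,j,l,m}) a = K} = {(p,q,r,s),(p,q,s,r),(p,r,q,s),(p,r,s,q),(p,s,q,r),(p,s,r,q),
     (q,p,r,s),(q,p,s,r),(q,r,p,s),(q,r,s,p),(q,s,p,r),(q,s,r,p),
     (r,p,q,s),(r,p,s,q),(r,q,p,s),(r,q,s,p),(r,s,p,q),(r,s,q,p),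
     (s,p,q,r),(s,p,r,q),(s,q,p,r),(s,q,r,p),(s,r,p,q),(s,r,q,p)}"
  proof
    show "{a \<in> Qs V E. (\<lambda>(i,j,l,m). {i,j,l,m}) a = K} \<subseteq> {(p,q,r,s),(p,q,s,r),(p,r,q,s),(p,r,s,q),(p,s,q,r),(p,s,r,q),
     (q,p,r,s),(q,p,s,r),(q,r,p,s),(q,r,s,p),(q,s,p,r),(q,s,r,p),
     (r,p,q,s),(r,p,s,q),(r,q,p,s),(r,q,s,p),(r,s,p,q),(r,s,q,p),
     (s,p,q,r),(s,p,r,q),(s,q,p,r),(s,q,r,p),(s,r,p,q),(s,r,q,p)}"
    proof
      fix t assume "t \<in> {a \<in> Qs V E. (\<lambda>(i,j,l,m). {i,j,l,m}) a = K}"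
      then obtain i j l m where tt: "t = (i,j,l,m)" and t: "(i,j,l,m) \<in> Qs V E" and K: "{i,j,l,m} = K"
        by (cases t) auto
      have e: "E i j" "E i l" "E i m" "E j l" "E l m" "E m j"
        using t unfolding Qs_def by simp_all
      have ne: "i \<noteq> j" "i \<noteq> l" "i \<noteq> m" "j \<noteq> l" "l \<noteq> m" "m \<noteq> j"
        using e(1-6) sg_Es(4)[OF G] by blast+
      have "distinct [i,j,l,m]" using ne by auto
      then show "t \<in> {(p,q,r,s),(p,q,s,r),(p,r,q,s),(p,r,s,q),(p,s,q,r),(p,s,r,q),
     (q,p,r,s),(q,p,s,r),(q,r,p,s),(q,r,s,p),(q,s,p,r),(q,s,r,p),
     (r,p,q,s),(r,p,s,q),(r,q,p,s),(r,q,s,p),(r,s,p,q),(r,s,q,p),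
     (s,p,q,r),(s,p,r,q),(s,q,p,r),(s,q,r,p),(s,r,p,q),(s,r,q,p)}" unfolding tt by (rule Q_fiber[OF D]) (use K Ke in simp)
    qed
    show "{(p,q,r,s),(p,q,s,r),(p,r,q,s),(p,r,s,q),(p,s,q,r),(p,s,r,q),
     (q,p,r,s),(q,p,s,r),(q,r,p,s),(q,r,s,p),(q,s,p,r),(q,s,r,p),
     (r,p,q,s),(r,p,s,q),(r,q,p,s),(r,q,s,p),(r,s,p,q),(r,s,q,p),
     (s,p,q,r),(s,p,r,q),(s,q,p,r),(s,q,r,p),(s,r,p,q),(s,r,q,p)} \<subseteq> {a \<in> Qs V E. (\<lambda>(i,j,l,m). {i,j,l,m}) a = K}"
    proof
      fix t assume "t \<in> {(p,q,r,s),(p,q,s,r),(p,r,q,s),(p,r,s,q),(p,s,q,r),(p,s,r,q),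
     (q,p,r,s),(q,p,s,r),(q,r,p,s),(q,r,s,p),(q,s,p,r),(q,s,r,p),
     (r,p,q,s),(r,p,s,q),(r,q,p,s),(r,q,s,p),(r,s,p,q),(r,s,q,p),
     (s,p,q,r),(s,p,r,q),(s,q,p,r),(s,q,r,p),(s,r,p,q),(s,r,q,p)}"
      then show "t \<in> {a \<in> Qs V E. (\<lambda>(i,j,l,m). {i,j,l,m}) a = K}"
        unfolding Ke by (elim insertE emptyE) (simp_all add: Qs_def Es Vs insert_commute)
    qed
  qed
  then show "card {a \<in> Qs V E. (\<lambda>(i,j,l,m). {i,j,l,m}) a = K} = 24"
    using card24[OF D] by simp
qed



lemma path_eq:
  assumes "distinct [a,b,c,d]" "distinct [a',b',c',d']"
   "{{a',b'},{b',c'},{c',d'}} \<subseteq> {{a,b},{b,c},{c,d}}"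
  shows "(a',b',c',d') = (a,b,c,d) \<or> (a',b',c',d') = (d,c,b,a)"
  using assms by (auto simp: doubleton_eq_iff)

lemma star_eq:
  assumes "distinct [c,a,b,d]" "distinct [c',a',b',d']"
   "{{c',a'},{c',b'},{c',d'}} \<subseteq> {{c,a},{c,b},{c,d}}"
  shows "c' = c \<and> {a',b',d'} = {a,b,d}"
  using assms by (auto simp: doubleton_eq_iff)

lemma gE:
  assumes G: "simple_graph V E" and "{x,y} \<in> gedges V E"
  shows "E x y" "x \<in> V" "y \<in> V" "x \<noteq> y"
proof -
  obtain u v where uv: "{x,y} = {u,v}" "u \<noteq> v" "E u v" "u \<in> V" "v \<in> V"
    by (rule gedges_elem[OF G assms(2)])
  have "E v u" using sg_Es(3)[OF G uv(3)] .
  then show "E x y" "x \<in> V" "y \<in> V" "x \<noteq> y" using uv by (auto simp: doubleton_eq_iff)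
qed

lemma card_inj3:
  assumes "finite N"
  shows "card {(a,b,d). a \<in> N \<and> b \<in> N \<and> d \<in> N \<and> a \<noteq> b \<and> a \<noteq> d \<and> b \<noteq> d}
         = card N * (card N - 1) * (card N - 2)"
proof -
  have eq: "{(a,b,d). a \<in> N \<and> b \<in> N \<and> d \<in> N \<and> a \<noteq> b \<and> a \<noteq> d \<and> b \<noteq> d}
    = Sigma N (\<lambda>a. Sigma (N - {a}) (\<lambda>b. N - {a,b}))" by auto
  have "card (Sigma N (\<lambda>a. Sigma (N - {a}) (\<lambda>b. N - {a,b})))
      = (\<Sum>a\<in>N. \<Sum>b\<in>N - {a}. card (N - {a,b}))"
    using assms by simp
  also have "\<dots> = (\<Sum>a\<in>N. \<Sum>b\<in>N - {a}. card N - 2)"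
  proof (intro sum.cong refl)
    fix a b assume "a \<in> N" "b \<in> N - {a}"
    then have "{a,b} \<subseteq> N" "card {a,b} = 2" by auto
    then show "card (N - {a,b}) = card N - 2" using assms by (simp add: card_Diff_subset)
  qed
  also have "\<dots> = (\<Sum>a\<in>N. (card N - 1) * (card N - 2))"
    using assms by (intro sum.cong refl) (simp add: card_Diff_singleton)
  also have "\<dots> = card N * (card N - 1) * (card N - 2)" by simp
  finally show ?thesis unfolding eq .
qed

lemma real_k3: "real (k * (k - 1) * (k - 2)) = real k * (real k - 1) * (real k - 2)"
proof (cases "k \<ge> 2")
  case True then show ?thesis by (simp add: of_nat_diff)
next
  case False then have "k = 0 \<or> k = 1" by auto
  then show ?thesis by auto
qed

definition Ss :: "'a set \<Rightarrow> ('a \<Rightarrow> 'a \<Rightarrow> bool) \<Rightarrow> ('a \<times> 'a \<times> 'a \<times> 'a) set" where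
  "Ss V E = {(c,a,b,d). c \<in> V \<and> E c a \<and> E c b \<and> E c d \<and> a \<noteq> b \<and> a \<noteq> d \<and> b \<noteq> d}"

lemma deg_nbhd: "deg V E i = card (nbhd V E i)" unfolding deg_def nbhd_def by simp

lemma sum_deg3:
  assumes G: "simple_graph V E"
  shows "(\<Sum>i\<in>V. real (deg V E i) * (real (deg V E i) - 1) * (real (deg V E i) - 2)) = real (card (Ss V E))"
proof -
  have fV: "finite V" using finV[OF G] .
  have fN: "finite (nbhd V E i)" for i using nbhd_sub fV by (rule finite_subset)
  let ?I = "\<lambda>N. {(a,b,d). a \<in> N \<and> b \<in> N \<and> d \<in> N \<and> a \<noteq> b \<and> a \<noteq> d \<and> b \<noteq> d}"
  have "Ss V E = Sigma V (\<lambda>c. ?I (nbhd V E c))"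
    unfolding Ss_def nbhd_def using sg_Es[OF G] by auto
  moreover have "finite (?I (nbhd V E c))" for c
    by (rule finite_subset[of _ "nbhd V E c \<times> nbhd V E c \<times> nbhd V E c"]) (auto simp: fN)
  ultimately have "card (Ss V E) = (\<Sum>c\<in>V. card (?I (nbhd V E c)))" using fV by simp
  also have "\<dots> = (\<Sum>c\<in>V. deg V E c * (deg V E c - 1) * (deg V E c - 2))"
    unfolding deg_nbhd by (intro sum.cong refl card_inj3[OF fN])
  finally have "real (card (Ss V E)) = (\<Sum>c\<in>V. real (deg V E c * (deg V E c - 1) * (deg V E c - 2)))"
    by simp
  then show ?thesis by (simp only: real_k3)
qed

lemma finite_Ss: "simple_graph V E \<Longrightarrow> finite (Ss V E)"
proof -
  assume G: "simple_graph V E"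
  have "Ss V E \<subseteq> V \<times> V \<times> V \<times> V" unfolding Ss_def using sg_Es[OF G] by auto
  then show ?thesis using finV[OF G] by (simp add: finite_subset)
qed

lemma finite_stars: "simple_graph V E \<Longrightarrow> finite (stars3 V E)"
proof -
  assume G: "simple_graph V E"
  have "stars3 V E \<subseteq> Pow (gedges V E)" unfolding stars3_def by blast
  then show ?thesis using finite_gedges[OF G] by (meson finite_Pow_iff finite_subset)
qed

lemma finite_paths: "simple_graph V E \<Longrightarrow> finite (paths4 V E)"
proof -
  assume G: "simple_graph V E"
  have "paths4 V E \<subseteq> Pow (gedges V E)" unfolding paths4_def by blast
  then show ?thesis using finite_gedges[OF G] by (meson finite_Pow_iff finite_subset)
qed

lemma S_fiber:
  assumes "distinct [a,b,d]" "distinct [a',b',d']" "{a',b',d'} = {a,b,d}"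
  shows "(a',b',d') \<in> {(a,b,d),(a,d,b),(b,a,d),(b,d,a),(d,a,b),(d,b,a)}"
proof -
  have "a' \<in> {a,b,d}" "b' \<in> {a,b,d}" "d' \<in> {a,b,d}" using assms(3) by blast+
  then show ?thesis using assms(2) by (elim insertE emptyE) simp_all
qed

lemma S_stars:
  assumes G: "simple_graph V E"
  shows "card (Ss V E) = 6 * card (stars3 V E)"
proof (rule card_fibers[where f="\<lambda>(c,a,b,d). {{c,a},{c,b},{c,d}}"])
  show "finite (Ss V E)" by (rule finite_Ss[OF G])
  show "finite (stars3 V E)" by (rule finite_stars[OF G])
  show "(\<lambda>(c,a,b,d). {{c,a},{c,b},{c,d}}) ` Ss V E \<subseteq> stars3 V E"
  proof
    fix F assume "F \<in> (\<lambda>(c,a,b,d). {{c,a},{c,b},{c,d}}) ` Ss V E"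
    then obtain c a b d where t: "(c,a,b,d) \<in> Ss V E" and F: "F = {{c,a},{c,b},{c,d}}" by auto
    have e: "E c a" "E c b" "E c d" "a \<noteq> b" "a \<noteq> d" "b \<noteq> d" using t unfolding Ss_def by simp_all
    have "c \<noteq> a" "c \<noteq> b" "c \<noteq> d" using e(1-3) sg_Es(4)[OF G] by blast+
    then have D: "distinct [c,a,b,d]" using e by simp
    have "{c,a} \<in> gedges V E" "{c,b} \<in> gedges V E" "{c,d} \<in> gedges V E"
      using e(1-3) sg_Es(1,2)[OF G] in_gedges by metis+
    then have "F \<subseteq> gedges V E" unfolding F by simp
    moreover have "\<exists>c a b d. distinct [c,a,b,d] \<and> F = {{c, a}, {c, b}, {c, d}}"
      using D F by (intro exI conjI) assumption+
    ultimately show "F \<in> stars3 V E" unfolding stars3_def by simp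
  qed
  fix F assume "F \<in> stars3 V E"
  then have FG: "F \<subseteq> gedges V E" and "\<exists>c a b d. distinct [c,a,b,d] \<and> F = {{c, a}, {c, b}, {c, d}}"
    unfolding stars3_def by simp_all
  then obtain c a b d where D: "distinct [c,a,b,d]" and Fe: "F = {{c, a}, {c, b}, {c, d}}"
    by (elim exE conjE) (rule that)
  have "{c,a} \<in> gedges V E" "{c,b} \<in> gedges V E" "{c,d} \<in> gedges V E"
    using FG unfolding Fe by simp_all
  then have Es: "E c a" "E c b" "E c d" "c \<in> V" using gE[OF G] by metis+
  have "{t \<in> Ss V E. (\<lambda>(c,a,b,d). {{c,a},{c,b},{c,d}}) t = F}
     = {(c,a,b,d),(c,a,d,b),(c,b,a,d),(c,b,d,a),(c,d,a,b),(c,d,b,a)}"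
  proof
    show "{t \<in> Ss V E. (\<lambda>(c,a,b,d). {{c,a},{c,b},{c,d}}) t = F}
     \<subseteq> {(c,a,b,d),(c,a,d,b),(c,b,a,d),(c,b,d,a),(c,d,a,b),(c,d,b,a)}"
    proof
      fix t assume "t \<in> {t \<in> Ss V E. (\<lambda>(c,a,b,d). {{c,a},{c,b},{c,d}}) t = F}"
      then obtain c' a' b' d' where tt: "t = (c',a',b',d')" and t: "(c',a',b',d') \<in> Ss V E"
        and F: "{{c',a'},{c',b'},{c',d'}} = F"
        by (cases t) auto
      have e: "E c' a'" "E c' b'" "E c' d'" "a' \<noteq> b'" "a' \<noteq> d'" "b' \<noteq> d'"
        using t unfolding Ss_def by simp_all
      have "c' \<noteq> a'" "c' \<noteq> b'" "c' \<noteq> d'" using e(1-3) sg_Es(4)[OF G] by blast+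
      then have D': "distinct [c',a',b',d']" using e by simp
      have "{{c',a'},{c',b'},{c',d'}} \<subseteq> {{c,a},{c,b},{c,d}}" using F Fe by simp
      from star_eq[OF D D' this] have "c' = c" "{a',b',d'} = {a,b,d}" by simp_all
      moreover have "(a',b',d') \<in> {(a,b,d),(a,d,b),(b,a,d),(b,d,a),(d,a,b),(d,b,a)}"
        by (rule S_fiber) (use D D' \<open>{a',b',d'} = {a,b,d}\<close> in simp_all)
      ultimately show "t \<in> {(c,a,b,d),(c,a,d,b),(c,b,a,d),(c,b,d,a),(c,d,a,b),(c,d,b,a)}"
        unfolding tt by auto
    qed
    show "{(c,a,b,d),(c,a,d,b),(c,b,a,d),(c,b,d,a),(c,d,a,b),(c,d,b,a)}
       \<subseteq> {t \<in> Ss V E. (\<lambda>(c,a,b,d). {{c,a},{c,b},{c,d}}) t = F}"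
    proof
      fix t assume tin: "t \<in> {(c,a,b,d),(c,a,d,b),(c,b,a,d),(c,b,d,a),(c,d,a,b),(c,d,b,a)}"
      show "t \<in> {t \<in> Ss V E. (\<lambda>(c,a,b,d). {{c,a},{c,b},{c,d}}) t = F}"
      proof -
        have ne: "a\<noteq>b" "b\<noteq>a" "a\<noteq>d" "d\<noteq>a" "b\<noteq>d" "d\<noteq>b" using D by auto
        show ?thesis using tin
          unfolding Fe by (elim insertE emptyE) (simp_all add: Ss_def Es ne insert_commute)
      qed
    qed
  qed
  then show "card {t \<in> Ss V E. (\<lambda>(c,a,b,d). {{c,a},{c,b},{c,d}}) t = F} = 6"
    using D by simp
qed



definition Ps :: "'a set \<Rightarrow> ('a \<Rightarrow> 'a \<Rightarrow> bool) \<Rightarrow> ('a \<times> 'a \<times> 'a \<times> 'a) set" where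
  "Ps V E = {(a,b,c,d). E a b \<and> E b c \<and> E c d \<and> a \<noteq> c \<and> b \<noteq> d \<and> a \<noteq> d}"

lemma finite_Ps: "simple_graph V E \<Longrightarrow> finite (Ps V E)"
proof -
  assume G: "simple_graph V E"
  have "Ps V E \<subseteq> V \<times> V \<times> V \<times> V" unfolding Ps_def using sg_Es[OF G] by auto
  then show ?thesis using finV[OF G] by (simp add: finite_subset)
qed

lemma P_paths:
  assumes G: "simple_graph V E"
  shows "card (Ps V E) = 2 * card (paths4 V E)"
proof (rule card_fibers[where f="\<lambda>(a,b,c,d). {{a,b},{b,c},{c,d}}"])
  show "finite (Ps V E)" by (rule finite_Ps[OF G])
  show "finite (paths4 V E)" by (rule finite_paths[OF G])
  show "(\<lambda>(a,b,c,d). {{a,b},{b,c},{c,d}}) ` Ps V E \<subseteq> paths4 V E"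
  proof
    fix F assume "F \<in> (\<lambda>(a,b,c,d). {{a,b},{b,c},{c,d}}) ` Ps V E"
    then obtain a b c d where t: "(a,b,c,d) \<in> Ps V E" and F: "F = {{a,b},{b,c},{c,d}}" by auto
    have e: "E a b" "E b c" "E c d" "a \<noteq> c" "b \<noteq> d" "a \<noteq> d" using t unfolding Ps_def by simp_all
    have "a \<noteq> b" "b \<noteq> c" "c \<noteq> d" using e(1-3) sg_Es(4)[OF G] by blast+
    then have D: "distinct [a,b,c,d]" using e by simp
    have "{a,b} \<in> gedges V E" "{b,c} \<in> gedges V E" "{c,d} \<in> gedges V E"
      using e(1-3) sg_Es(1,2)[OF G] in_gedges by metis+
    then have "F \<subseteq> gedges V E" unfolding F by simp
    moreover have "\<exists>a b c d. distinct [a,b,c,d] \<and> F = {{a, b}, {b, c}, {c, d}}"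
      using D F by (intro exI conjI) assumption+
    ultimately show "F \<in> paths4 V E" unfolding paths4_def by simp
  qed
  fix F assume "F \<in> paths4 V E"
  then have FG: "F \<subseteq> gedges V E" and "\<exists>a b c d. distinct [a,b,c,d] \<and> F = {{a, b}, {b, c}, {c, d}}"
    unfolding paths4_def by simp_all
  then obtain a b c d where D: "distinct [a,b,c,d]" and Fe: "F = {{a, b}, {b, c}, {c, d}}"
    by (elim exE conjE) (rule that)
  have "{a,b} \<in> gedges V E" "{b,c} \<in> gedges V E" "{c,d} \<in> gedges V E"
    using FG unfolding Fe by simp_all
  then have Es: "E a b" "E b c" "E c d" "E b a" "E c b" "E d c" using gE[OF G] sg_Es(3)[OF G] by metis+
  have "{t \<in> Ps V E. (\<lambda>(a,b,c,d). {{a,b},{b,c},{c,d}}) t = F} = {(a,b,c,d),(d,c,b,a)}"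
  proof
    show "{t \<in> Ps V E. (\<lambda>(a,b,c,d). {{a,b},{b,c},{c,d}}) t = F} \<subseteq> {(a,b,c,d),(d,c,b,a)}"
    proof
      fix t assume "t \<in> {t \<in> Ps V E. (\<lambda>(a,b,c,d). {{a,b},{b,c},{c,d}}) t = F}"
      then obtain a' b' c' d' where tt: "t = (a',b',c',d')" and t: "(a',b',c',d') \<in> Ps V E"
        and F: "{{a',b'},{b',c'},{c',d'}} = F"
        by (cases t) auto
      have e: "E a' b'" "E b' c'" "E c' d'" "a' \<noteq> c'" "b' \<noteq> d'" "a' \<noteq> d'"
        using t unfolding Ps_def by simp_all
      have "a' \<noteq> b'" "b' \<noteq> c'" "c' \<noteq> d'" using e(1-3) sg_Es(4)[OF G] by blast+
      then have D': "distinct [a',b',c',d']" using e by simp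
      have "{{a',b'},{b',c'},{c',d'}} \<subseteq> {{a,b},{b,c},{c,d}}" using F Fe by simp
      from path_eq[OF D D' this] show "t \<in> {(a,b,c,d),(d,c,b,a)}" unfolding tt by blast
    qed
    show "{(a,b,c,d),(d,c,b,a)} \<subseteq> {t \<in> Ps V E. (\<lambda>(a,b,c,d). {{a,b},{b,c},{c,d}}) t = F}"
    proof
      fix t assume tin: "t \<in> {(a,b,c,d),(d,c,b,a)}"
      have ne: "a\<noteq>c" "c\<noteq>a" "b\<noteq>d" "d\<noteq>b" "a\<noteq>d" "d\<noteq>a" using D by auto
      show "t \<in> {t \<in> Ps V E. (\<lambda>(a,b,c,d). {{a,b},{b,c},{c,d}}) t = F}"
        using tin unfolding Fe by (elim insertE emptyE) (simp_all add: Ps_def Es ne insert_commute)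
    qed
  qed
  then show "card {t \<in> Ps V E. (\<lambda>(a,b,c,d). {{a,b},{b,c},{c,d}}) t = F} = 2"
    using D by simp
qed

definition Dir :: "'a set \<Rightarrow> ('a \<Rightarrow> 'a \<Rightarrow> bool) \<Rightarrow> ('a \<times> 'a) set" where
  "Dir V E = {(x,y). E x y}"

lemma finite_Dir: "simple_graph V E \<Longrightarrow> finite (Dir V E)"
proof -
  assume G: "simple_graph V E"
  have "Dir V E \<subseteq> V \<times> V" unfolding Dir_def using sg_Es[OF G] by auto
  then show ?thesis using finV[OF G] by (simp add: finite_subset)
qed

lemma edge_sum:
  fixes f :: "'a \<Rightarrow> real"
  assumes G: "simple_graph V E"
  shows "2 * (\<Sum>e\<in>gedges V E. \<Prod>v\<in>e. f v) = (\<Sum>(x,y)\<in>Dir V E. f x * f y)"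
proof -
  have img: "(\<lambda>(x,y). {x,y}) ` Dir V E \<subseteq> gedges V E"
  proof
    fix e assume "e \<in> (\<lambda>(x,y). {x,y}) ` Dir V E"
    then obtain x y where "E x y" "e = {x,y}" unfolding Dir_def by auto
    then show "e \<in> gedges V E" using sg_Es(1,2)[OF G] in_gedges by metis
  qed
  have "(\<Sum>(x,y)\<in>Dir V E. f x * f y)
     = (\<Sum>e\<in>gedges V E. \<Sum>t\<in>{t. t \<in> Dir V E \<and> (\<lambda>(x,y). {x,y}) t = e}. (\<lambda>(x,y). f x * f y) t)"
    using sum.group[OF finite_Dir[OF G] finite_gedges[OF G] img, of "\<lambda>(x,y). f x * f y"] by simp
  also have "\<dots> = (\<Sum>e\<in>gedges V E. 2 * (\<Prod>v\<in>e. f v))"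
  proof (intro sum.cong refl)
    fix e assume "e \<in> gedges V E"
    then obtain x y where e: "e = {x,y}" "x \<noteq> y" "E x y" "x \<in> V" "y \<in> V"
      by (rule gedges_elem[OF G])
    have "E y x" using sg_Es(3)[OF G e(3)] .
    have "{t. t \<in> Dir V E \<and> (\<lambda>(x,y). {x,y}) t = e} = {(x,y),(y,x)}"
    proof (rule set_eqI)
      fix t :: "'a \<times> 'a"
      obtain u v where t: "t = (u,v)" by (cases t)
      have "({u,v} = {x,y} \<and> E u v) \<longleftrightarrow> (u = x \<and> v = y) \<or> (u = y \<and> v = x)"
        using e(3) \<open>E y x\<close> by (auto simp: doubleton_eq_iff)
      then show "t \<in> {t. t \<in> Dir V E \<and> (\<lambda>(x,y). {x,y}) t = e} \<longleftrightarrow> t \<in> {(x,y),(y,x)}"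
        unfolding t Dir_def e(1) by auto
    qed
    then show "(\<Sum>t\<in>{t. t \<in> Dir V E \<and> (\<lambda>(x,y). {x,y}) t = e}. (\<lambda>(x,y). f x * f y) t) = 2 * (\<Prod>v\<in>e. f v)"
      using e(2) unfolding e(1) by (simp add: mult.commute)
  qed
  finally show ?thesis by (simp add: sum_distrib_left)
qed

definition P2 :: "'a set \<Rightarrow> ('a \<Rightarrow> 'a \<Rightarrow> bool) \<Rightarrow> ('a \<times> 'a \<times> 'a \<times> 'a) set" where
  "P2 V E = {(a,b,c,d). E a b \<and> E b c \<and> E c d \<and> a \<noteq> c \<and> b \<noteq> d}"

lemma finite_P2: "simple_graph V E \<Longrightarrow> finite (P2 V E)"
proof -
  assume G: "simple_graph V E"
  have "P2 V E \<subseteq> V \<times> V \<times> V \<times> V" unfolding P2_def using sg_Es[OF G] by auto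
  then show ?thesis using finV[OF G] by (simp add: finite_subset)
qed

lemma P2_sum:
  assumes G: "simple_graph V E"
  shows "real (card (P2 V E)) = (\<Sum>(x,y)\<in>Dir V E. (real (deg V E x) - 1) * (real (deg V E y) - 1))"
proof -
  have fV: "finite V" using finV[OF G] .
  have fN: "finite (nbhd V E i)" for i using nbhd_sub fV by (rule finite_subset)
  have img: "(\<lambda>(a,b,c,d). (b,c)) ` P2 V E \<subseteq> Dir V E"
    unfolding P2_def Dir_def by auto
  have "card (P2 V E) = (\<Sum>t\<in>P2 V E. 1)" by simp
  also have "\<dots> = (\<Sum>bc\<in>Dir V E. \<Sum>t\<in>{t. t \<in> P2 V E \<and> (\<lambda>(a,b,c,d). (b,c)) t = bc}. 1)"
    using sum.group[OF finite_P2[OF G] finite_Dir[OF G] img, of "\<lambda>_. 1::nat"] by simp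
  also have "\<dots> = (\<Sum>(x,y)\<in>Dir V E. (deg V E x - 1) * (deg V E y - 1))"
  proof (intro sum.cong refl)
    fix bc assume "bc \<in> Dir V E"
    then obtain b c where bc: "bc = (b,c)" "E b c" unfolding Dir_def by auto
    have "E c b" "b \<in> V" "c \<in> V" using sg_Es[OF G bc(2)] by auto
    have cin: "c \<in> nbhd V E b" "b \<in> nbhd V E c" using bc(2) \<open>E c b\<close> \<open>b \<in> V\<close> \<open>c \<in> V\<close>
      unfolding nbhd_def by auto
    have "{t. t \<in> P2 V E \<and> (\<lambda>(a,b,c,d). (b,c)) t = bc}
      = (\<lambda>(a,d). (a,b,c,d)) ` ((nbhd V E b - {c}) \<times> (nbhd V E c - {b}))"
    proof
      show "{t. t \<in> P2 V E \<and> (\<lambda>(a,b,c,d). (b,c)) t = bc}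
        \<subseteq> (\<lambda>(a,d). (a,b,c,d)) ` ((nbhd V E b - {c}) \<times> (nbhd V E c - {b}))"
      proof
        fix t assume "t \<in> {t. t \<in> P2 V E \<and> (\<lambda>(a,b,c,d). (b,c)) t = bc}"
        then obtain a d where tt: "t = (a,b,c,d)" "E a b" "E c d" "a \<noteq> c" "b \<noteq> d"
          unfolding P2_def bc(1) by auto
        have "E b a" "a \<in> V" "d \<in> V" using sg_Es[OF G tt(2)] sg_Es[OF G tt(3)] by auto
        then have "(a,d) \<in> (nbhd V E b - {c}) \<times> (nbhd V E c - {b})"
          using tt unfolding nbhd_def by auto
        then show "t \<in> (\<lambda>(a,d). (a,b,c,d)) ` ((nbhd V E b - {c}) \<times> (nbhd V E c - {b}))"
          unfolding tt(1) by force
      qed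
      show "(\<lambda>(a,d). (a,b,c,d)) ` ((nbhd V E b - {c}) \<times> (nbhd V E c - {b}))
        \<subseteq> {t. t \<in> P2 V E \<and> (\<lambda>(a,b,c,d). (b,c)) t = bc}"
      proof
        fix t assume "t \<in> (\<lambda>(a,d). (a,b,c,d)) ` ((nbhd V E b - {c}) \<times> (nbhd V E c - {b}))"
        then obtain a d where tt: "t = (a,b,c,d)" "E b a" "E c d" "a \<noteq> c" "d \<noteq> b"
          unfolding nbhd_def by auto
        have "E a b" using sg_Es(3)[OF G tt(2)] .
        then show "t \<in> {t. t \<in> P2 V E \<and> (\<lambda>(a,b,c,d). (b,c)) t = bc}"
          using tt bc unfolding P2_def by auto
      qed
    qed
    moreover have "inj_on (\<lambda>(a,d). (a,b,c,d)) ((nbhd V E b - {c}) \<times> (nbhd V E c - {b}))"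
      by (auto simp: inj_on_def)
    ultimately have "card {t. t \<in> P2 V E \<and> (\<lambda>(a,b,c,d). (b,c)) t = bc}
       = card (nbhd V E b - {c}) * card (nbhd V E c - {b})"
      by (simp add: card_image card_cartesian_product)
    also have "\<dots> = (deg V E b - 1) * (deg V E c - 1)"
      using cin fN by (simp add: card_Diff_singleton deg_nbhd)
    finally show "(\<Sum>t\<in>{t. t \<in> P2 V E \<and> (\<lambda>(a,b,c,d). (b,c)) t = bc}. 1)
       = (\<lambda>(x,y). (deg V E x - 1) * (deg V E y - 1)) bc"
      unfolding bc(1) by simp
  qed
  finally have "real (card (P2 V E)) = (\<Sum>(x,y)\<in>Dir V E. real ((deg V E x - 1) * (deg V E y - 1)))"
    by (simp add: case_prod_beta)
  also have "\<dots> = (\<Sum>(x,y)\<in>Dir V E. (real (deg V E x) - 1) * (real (deg V E y) - 1))"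
  proof (intro sum.cong refl)
    fix xy assume "xy \<in> Dir V E"
    then obtain x y where xy: "xy = (x,y)" "E x y" unfolding Dir_def by auto
    have "E y x" "x \<in> V" "y \<in> V" using sg_Es[OF G xy(2)] by auto
    then have "y \<in> nbhd V E x" "x \<in> nbhd V E y" using xy(2) unfolding nbhd_def by auto
    then have "deg V E x \<ge> 1" "deg V E y \<ge> 1" unfolding deg_nbhd using fN
      by (auto simp: Suc_le_eq card_gt_0_iff)
    then show "(\<lambda>(x,y). real ((deg V E x - 1) * (deg V E y - 1))) xy
      = (\<lambda>(x,y). (real (deg V E x) - 1) * (real (deg V E y) - 1)) xy"
      unfolding xy(1) by (simp add: of_nat_diff)
  qed
  finally show ?thesis .
qed

lemma P2_split:
  assumes G: "simple_graph V E"
  shows "card (P2 V E) = card (Ps V E) + card (tri3 V E)"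
proof -
  have eq: "P2 V E = Ps V E \<union> (\<lambda>(a,b,c). (a,b,c,a)) ` tri3 V E"
  proof
    show "P2 V E \<subseteq> Ps V E \<union> (\<lambda>(a,b,c). (a,b,c,a)) ` tri3 V E"
    proof
      fix t assume "t \<in> P2 V E"
      then obtain a b c d where tt: "t = (a,b,c,d)" "E a b" "E b c" "E c d" "a \<noteq> c" "b \<noteq> d"
        unfolding P2_def by auto
      show "t \<in> Ps V E \<union> (\<lambda>(a,b,c). (a,b,c,a)) ` tri3 V E"
      proof (cases "a = d")
        case True
        have "a \<in> V" "b \<in> V" "c \<in> V" using sg_Es[OF G tt(2)] sg_Es[OF G tt(3)] by auto
        then have "(a,b,c) \<in> tri3 V E" using tt True unfolding tri3_def by auto
        then show ?thesis unfolding tt(1) True by force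
      next
        case False then show ?thesis using tt unfolding Ps_def by auto
      qed
    qed
    show "Ps V E \<union> (\<lambda>(a,b,c). (a,b,c,a)) ` tri3 V E \<subseteq> P2 V E"
    proof
      fix t assume "t \<in> Ps V E \<union> (\<lambda>(a,b,c). (a,b,c,a)) ` tri3 V E"
      then show "t \<in> P2 V E"
      proof
        assume "t \<in> Ps V E" then show ?thesis unfolding Ps_def P2_def by auto
      next
        assume "t \<in> (\<lambda>(a,b,c). (a,b,c,a)) ` tri3 V E"
        then obtain a b c where tt: "t = (a,b,c,a)" "E a b" "E b c" "E c a"
          unfolding tri3_def by auto
        have "a \<noteq> c" "b \<noteq> a" using sg_Es(4)[OF G tt(4)] sg_Es(4)[OF G tt(2)] by auto
        then show ?thesis using tt unfolding P2_def by auto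
      qed
    qed
  qed
  have fT: "finite (tri3 V E)"
    using finV[OF G] tri3_sub by (meson finite_cartesian_product finite_subset)
  have "(\<lambda>(a,b,c). (a,b,c,a)) ` tri3 V E \<subseteq> P2 V E" using eq by blast
  moreover have "Ps V E \<inter> (\<lambda>(a,b,c). (a,b,c,a)) ` tri3 V E = {}" unfolding Ps_def by auto
  moreover have "card ((\<lambda>(a,b,c). (a,b,c,a)) ` tri3 V E) = card (tri3 V E)"
    by (rule card_image) (auto simp: inj_on_def)
  ultimately show ?thesis unfolding eq
    using finite_Ps[OF G] fT by (simp add: card_Un_disjoint)
qed



theorem mainTheorem7:
  fixes V :: "'a set" and E :: "'a \<Rightarrow> 'a \<Rightarrow> bool"
  assumes "simple_graph V E"
    and "spanning_trees V E 4 \<noteq> {}"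
  shows "C V E 4 = 16 * real (card (cliques V E 4))
                   / (real (card (stars3 V E)) + real (card (paths4 V E)))
       \<and> 16 * real (card (cliques V E 4))
                   / (real (card (stars3 V E)) + real (card (paths4 V E)))
         = 4 * (\<Sum>i\<in>V. trace_cube (nbhd V E i) (adj E))
           / ((\<Sum>i\<in>V. real (deg V E i) * (real (deg V E i) - 1) * (real (deg V E i) - 2))
              + 6 * (\<Sum>e\<in>gedges V E. \<Prod>v\<in>e. (real (deg V E v) - 1))
              - 3 * trace_cube V (adj E))"
proof -
  have G: "simple_graph V E" by fact
  define k where "k = real (card (cliques V E 4))"
  define s where "s = real (card (stars3 V E))"
  define p where "p = real (card (paths4 V E))"
  define t where "t = real (card (tri3 V E))"
  have e1: "(\<Sum>i\<in>V. trace_cube (nbhd V E i) (adj E)) = 24 * k"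
    unfolding sum_trace_Qs[OF G] Q_cliques[OF G] k_def by simp
  have e2: "(\<Sum>i\<in>V. real (deg V E i) * (real (deg V E i) - 1) * (real (deg V E i) - 2)) = 6 * s"
    unfolding sum_deg3[OF G] S_stars[OF G] s_def by simp
  have "2 * (\<Sum>e\<in>gedges V E. \<Prod>v\<in>e. (real (deg V E v) - 1)) = real (card (P2 V E))"
    unfolding edge_sum[OF G] P2_sum[OF G] ..
  also have "\<dots> = 2 * p + t"
    unfolding P2_split[OF G] P_paths[OF G] p_def t_def by simp
  finally have e3: "(\<Sum>e\<in>gedges V E. \<Prod>v\<in>e. (real (deg V E v) - 1)) = p + t / 2" by simp
  have e4: "trace_cube V (adj E) = t" unfolding t_def by (rule trace_card[OF finV[OF G]])
  have c: "C V E 4 = 16 * k / (s + p)"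
    unfolding C_def card_st[OF G] k_def s_def p_def by simp
  have d: "4 * (24 * k) / (6 * s + 6 * (p + t / 2) - 3 * t) = 16 * k / (s + p)"
  proof -
    have "6 * s + 6 * (p + t / 2) - 3 * t = 6 * (s + p)" by (simp add: algebra_simps)
    then have "4 * (24 * k) / (6 * s + 6 * (p + t / 2) - 3 * t) = (6 * (16 * k)) / (6 * (s + p))"
      by simp
    also have "\<dots> = 16 * k / (s + p)" by (rule mult_divide_mult_cancel_left) simp
    finally show ?thesis .
  qed
  show ?thesis unfolding e1 e2 e3 e4 using c d unfolding k_def s_def p_def by simp
qed


end
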